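(* Let $l,m,n$ be positive integers with $l\le\min\{m,n\}$, and let $x,y,z$ be complex numbers with $x+y+z=1$. Then $$(-1)^m\sum_{k=0}^m\binom mk\binom{n+k}{l-1}B_{n-l+k+1}(x)E_{m-k}(z)+(-1)^{n-l}\sum_{k=0}^n\binom nk\binom{m+k}{l-1}B_{m-l+k+1}(y)E_{n-k}(z)=-\frac l2\sum_{k=0}^l(-1)^k\binom mk\binom n{l-k}E_{n-l+k}(x)E_{m-k}(y),$$ $$\sum_{k=0}^{l}(-1)^k\binom mk\binom n{l-k}B_{m-k}(x)E_{n-l+k}(z)-(-1)^m\sum_{k=0}^m\binom mk\binom{n+k}{l}B_{m-k}(y)E_{n-l+k}(z)=(-1)^{n-l-1}\frac m2\sum^n_{k=\delta_{l,m}}\binom nk\binom{m+k-1}{l}E_{n-k}(y)E_{m-l-1+k}(x),$$ and $$\frac{(-1)^m}m\sum_{k=0}^m\binom mk\binom{n+k-1}{l-1}B_{n-l+k}(x)B_{m-k}(z)+(-1)^l\frac{(-1)^n}n\sum_{k=0}^n\binom nk\binom{m+k-1}{l-1}B_{m-l+k}(y)B_{n-k}(z)=\frac l{mn}\sum_{k=0}^l(-1)^k\binom mk\binom n{l-k}B_{n-l+k}(x)B_{m-k}(y).$$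
   Context: $\delta_{l,m}$ equals $1$ if $l=m$ and $0$ otherwise. Bernoulli numbers are defined by $B_0=1$ and $\sum_{k=0}^n\binom{n+1}kB_k=0$ for $n\ge1$; Euler numbers by $E_0=1$ and $\sum_{0\le k\le n,\,2\mid n-k}\binom nkE_k=0$ for $n\ge1$. The Bernoulli polynomials are $B_n(x)=\sum_{k=0}^n\binom nkB_kx^{n-k}$ and the Euler polynomials are $E_n(x)=\sum_{k=0}^n\binom nk\frac{E_k}{2^k}(x-\frac12)^{n-k}$. *)

theory Defs
  imports Complex_Main
begin

text \<open>Bernoulli numbers: B_0 = 1 and sum_{k=0}^n C(n+1,k) B_k = 0 for n >= 1.\<close>
fun bern :: "nat \<Rightarrow> complex" where
  "bern n = (if n = 0 then 1
     else - (\<Sum>k<n. of_nat ((n + 1) choose k) * bern k) / of_nat (n + 1))"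

text \<open>Euler numbers: E_0 = 1 and sum over 0<=k<=n, 2 | n-k of C(n,k) E_k = 0 for n >= 1.\<close>
fun eul :: "nat \<Rightarrow> complex" where
  "eul n = (if n = 0 then 1
     else - (\<Sum>k<n. if even (n - k) then of_nat (n choose k) * eul k else 0))"

definition bernpoly :: "nat \<Rightarrow> complex \<Rightarrow> complex" where
  "bernpoly n x = (\<Sum>k\<le>n. of_nat (n choose k) * bern k * x ^ (n - k))"

definition eulpoly :: "nat \<Rightarrow> complex \<Rightarrow> complex" where
  "eulpoly n x = (\<Sum>k\<le>n. of_nat (n choose k) * (eul k / 2 ^ k) * (x - 1/2) ^ (n - k))"

end

theory Submission
  imports Defs "HOL-Computational_Algebra.Formal_Power_Series" "HOL-Computational_Algebra.Polynomial"
begin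


declare bern.simps[simp del] eul.simps[simp del]

lemma bern_rec:
  assumes "0 < n"
  shows "(\<Sum>k<Suc n. of_nat (Suc n choose k) * bern k) = 0"
proof -
  have "bern n = - (\<Sum>k<n. of_nat ((n + 1) choose k) * bern k) / of_nat (n + 1)"
    using assms by (subst bern.simps) simp
  hence "of_nat (n+1) * bern n = - (\<Sum>k<n. of_nat ((n + 1) choose k) * bern k)"
    by (simp add: field_simps del: of_nat_Suc)
  thus ?thesis by (simp add: algebra_simps)
qed

lemma bern_0: "bern 0 = 1" by (simp add: bern.simps)
lemma eul_0: "eul 0 = 1" by (simp add: eul.simps)

lemma eul_rec:
  assumes "0 < n"
  shows "(\<Sum>k\<le>n. if even (n - k) then of_nat (n choose k) * eul k else 0) = 0"
proof -
  have "eul n = - (\<Sum>k<n. if even (n - k) then of_nat (n choose k) * eul k else 0)"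
    using assms by (subst eul.simps) simp
  thus ?thesis by (simp add: lessThan_Suc_atMost[symmetric])
qed

definition Bn :: "complex fps" where "Bn = Abs_fps (\<lambda>n. bern n / fact n)"
definition En :: "complex fps" where "En = Abs_fps (\<lambda>n. eul n / (2 ^ n * fact n))"
definition bB :: "complex \<Rightarrow> complex fps" where "bB x = Abs_fps (\<lambda>n. bernpoly n x / fact n)"
definition bE :: "complex \<Rightarrow> complex fps" where "bE x = Abs_fps (\<lambda>n. eulpoly n x / fact n)"

lemma bB_eq: "bB x = Bn * fps_exp x"
proof (rule fps_ext)
  fix n
  have "fps_nth (bB x) n = (\<Sum>k\<le>n. of_nat (n choose k) * bern k * x ^ (n - k)) / fact n"
    by (simp add: bB_def bernpoly_def)
  also have "\<dots> = (\<Sum>k\<le>n. bern k / fact k * (x ^ (n - k) / fact (n - k)))"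
    by (simp add: sum_divide_distrib binomial_fact field_simps)
  also have "\<dots> = fps_nth (Bn * fps_exp x) n"
    by (simp add: fps_mult_nth Bn_def atMost_atLeast0)
  finally show "fps_nth (bB x) n = fps_nth (Bn * fps_exp x) n" .
qed

lemma bE_eq: "bE x = En * fps_exp (x - 1/2)"
proof (rule fps_ext)
  fix n
  have "fps_nth (bE x) n = (\<Sum>k\<le>n. of_nat (n choose k) * (eul k / 2 ^ k) * (x - 1/2) ^ (n - k)) / fact n"
    by (simp add: bE_def eulpoly_def)
  also have "\<dots> = (\<Sum>k\<le>n. eul k / (2 ^ k * fact k) * ((x - 1/2) ^ (n - k) / fact (n - k)))"
    by (simp add: sum_divide_distrib binomial_fact field_simps)
  also have "\<dots> = fps_nth (En * fps_exp (x - 1/2)) n"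
    by (simp add: fps_mult_nth En_def atMost_atLeast0)
  finally show "fps_nth (bE x) n = fps_nth (En * fps_exp (x - 1/2)) n" .
qed

lemma Bn_rec: "(fps_exp 1 - 1) * Bn = fps_X"
proof (rule fps_ext)
  fix N
  have "fps_nth ((fps_exp 1 - 1) * Bn) N = fps_nth (Bn * fps_exp 1) N - fps_nth Bn N"
    by (simp add: algebra_simps)
  also have "\<dots> = (\<Sum>k\<le>N. bern k / (fact k * fact (N - k))) - bern N / fact N"
    by (simp add: fps_mult_nth Bn_def atMost_atLeast0)
  also have "\<dots> = (\<Sum>k<N. bern k / (fact k * fact (N - k)))"
    by (simp add: lessThan_Suc_atMost[symmetric])
  also have "\<dots> = (\<Sum>k<N. of_nat (N choose k) * bern k) / fact N"
    by (simp add: sum_divide_distrib binomial_fact field_simps)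
  also have "\<dots> = fps_nth fps_X N"
  proof (cases N)
    case 0 then show ?thesis by simp
  next
    case (Suc M)
    show ?thesis
    proof (cases M)
      case 0 then show ?thesis using Suc by (simp add: bern_0)
    next
      case (Suc M') then show ?thesis using \<open>N = Suc M\<close> bern_rec[of M] by simp
    qed
  qed
  finally show "fps_nth ((fps_exp 1 - 1) * Bn) N = fps_nth fps_X N" .
qed

lemma En_rec: "En * (fps_exp (1/2) + fps_exp (-1/2)) = 2"
proof (rule fps_ext)
  fix N
  have "fps_nth (En * (fps_exp (1/2) + fps_exp (-1/2))) N
     = (\<Sum>k\<le>N. eul k / (2 ^ k * fact k) * (((1/2) ^ (N - k) + (-1/2) ^ (N - k)) / fact (N - k)))"
    by (simp add: fps_mult_nth En_def atMost_atLeast0 add_divide_distrib)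
  also have "\<dots> = (\<Sum>k\<le>N. if even (N - k) then of_nat (N choose k) * eul k else 0) * (2 / (2 ^ N * fact N))"
    unfolding sum_distrib_right
  proof (rule sum.cong[OF refl])
    fix k assume k: "k \<in> {..N}"
    hence kN: "k \<le> N" by simp
    have p: "(2::complex) ^ N = 2 ^ k * 2 ^ (N - k)" using kN by (simp add: power_add[symmetric])
    show "eul k / (2 ^ k * fact k) * (((1/2) ^ (N - k) + (-1/2) ^ (N - k)) / fact (N - k)) =
         (if even (N - k) then of_nat (N choose k) * eul k else 0) * (2 / (2 ^ N * fact N))"
    proof (cases "even (N - k)")
      case True
      then show ?thesis using kN
        by (simp add: p binomial_fact power_minus_even field_simps power_divide)
    next
      case False
      then show ?thesis by (simp add: power_minus_odd)
    qed
  qed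
  also have "\<dots> = fps_nth 2 N"
  proof (cases N)
    case 0 then show ?thesis by (simp add: eul_0)
  next
    case (Suc M) then show ?thesis using eul_rec[of N] by (simp add: numeral_fps_const)
  qed
  finally show "fps_nth (En * (fps_exp (1/2) + fps_exp (-1/2))) N = fps_nth 2 N" .
qed

lemma exp_add: "fps_exp (a + b) = fps_exp (a::complex) * fps_exp b"
  by (rule fps_exp_add_mult)

lemma F1: "(fps_exp 1 - 1) * bB x = fps_X * fps_exp x"
  by (simp add: bB_eq Bn_rec mult.assoc[symmetric])

lemma F2: "(fps_exp 1 + 1) * bE x = 2 * fps_exp x"
proof -
  have "(fps_exp 1 + 1) * fps_exp (x - 1/2) = (fps_exp (1/2) + fps_exp (-1/2)) * fps_exp (x::complex)"
    by (simp add: algebra_simps exp_add[symmetric])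
  hence "(fps_exp 1 + 1) * bE x = En * (fps_exp (1/2) + fps_exp (-1/2)) * fps_exp x"
    by (simp add: bE_eq mult.assoc mult.left_commute[of En])
  thus ?thesis using En_rec by simp
qed

lemma exp1_m1_nz: "fps_exp (1::complex) - 1 \<noteq> 0"
proof
  assume "fps_exp (1::complex) - 1 = 0"
  hence "fps_nth (fps_exp (1::complex) - 1) 1 = 0" by simp
  thus False by simp
qed

lemma exp_p1_nz: "fps_exp (a::complex) + 1 \<noteq> 0"
proof
  assume "fps_exp a + 1 = 0"
  hence "fps_nth (fps_exp a + 1) 0 = 0" by simp
  thus False by simp
qed

definition negf :: "complex fps \<Rightarrow> complex fps" where
  "negf f = Abs_fps (\<lambda>n. (-1) ^ n * fps_nth f n)"

lemma negf_nth: "fps_nth (negf f) n = (-1) ^ n * fps_nth f n"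
  by (simp add: negf_def)

lemma negf_mult: "negf (f * g) = negf f * negf g"
proof (rule fps_ext)
  fix n
  have "fps_nth (negf (f * g)) n = (\<Sum>i=0..n. (-1) ^ n * (fps_nth f i * fps_nth g (n - i)))"
    by (simp add: negf_nth fps_mult_nth sum_distrib_left)
  also have "\<dots> = (\<Sum>i=0..n. fps_nth (negf f) i * fps_nth (negf g) (n - i))"
  proof (rule sum.cong[OF refl])
    fix i assume "i \<in> {0..n}"
    hence "(-1::complex) ^ n = (-1) ^ i * (-1) ^ (n - i)" by (simp add: power_add[symmetric])
    thus "(-1) ^ n * (fps_nth f i * fps_nth g (n - i)) = fps_nth (negf f) i * fps_nth (negf g) (n - i)"
      by (simp add: negf_nth)
  qed
  also have "\<dots> = fps_nth (negf f * negf g) n" by (simp add: fps_mult_nth)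
  finally show "fps_nth (negf (f * g)) n = fps_nth (negf f * negf g) n" .
qed

lemma negf_add: "negf (f + g) = negf f + negf g"
  by (rule fps_ext) (simp add: negf_nth algebra_simps)
lemma negf_diff: "negf (f - g) = negf f - negf g"
  by (rule fps_ext) (simp add: negf_nth algebra_simps)
lemma negf_const: "negf (fps_const c) = fps_const c"
  by (rule fps_ext) (simp add: negf_nth)
lemma negf_1: "negf 1 = 1"
  using negf_const[of 1] by simp
lemma negf_2: "negf 2 = 2"
  using negf_const[of 2] by (simp add: numeral_fps_const)
lemma negf_X: "negf fps_X = - fps_X"
  by (rule fps_ext) (simp add: negf_nth)
lemma negf_exp: "negf (fps_exp a) = fps_exp (- a)"
  by (rule fps_ext) (simp add: negf_nth power_minus')

lemma negf_bB: "negf (bB y) = bB (1 - y)"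
proof -
  have "negf ((fps_exp 1 - 1) * bB y) = negf (fps_X * fps_exp y)" by (simp add: F1)
  hence a: "(fps_exp (-1) - 1) * negf (bB y) = - fps_X * fps_exp (- y)"
    by (simp add: negf_mult negf_diff negf_1 negf_X negf_exp)
  have "(fps_exp 1 - 1) * negf (bB y) = - fps_exp 1 * ((fps_exp (-1) - 1) * negf (bB y))"
    by (simp add: algebra_simps exp_add[symmetric])
  also have "\<dots> = fps_X * fps_exp (1 - y)"
    unfolding a by (simp add: algebra_simps exp_add[symmetric])
  also have "\<dots> = (fps_exp 1 - 1) * bB (1 - y)" by (simp add: F1)
  finally show ?thesis using exp1_m1_nz by simp
qed

lemma negf_bE: "negf (bE y) = bE (1 - y)"
proof -
  have "negf ((fps_exp 1 + 1) * bE y) = negf (2 * fps_exp y)" by (simp add: F2)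
  hence a: "(fps_exp (-1) + 1) * negf (bE y) = 2 * fps_exp (- y)"
    by (simp add: negf_mult negf_add negf_1 negf_2 negf_exp)
  have "(fps_exp 1 + 1) * negf (bE y) = fps_exp 1 * ((fps_exp (-1) + 1) * negf (bE y))"
    by (simp add: algebra_simps exp_add[symmetric])
  also have "\<dots> = 2 * fps_exp (1 - y)"
    unfolding a by (simp add: algebra_simps exp_add[symmetric])
  also have "\<dots> = (fps_exp 1 + 1) * bE (1 - y)" by (simp add: F2)
  finally show ?thesis using exp_p1_nz[of 1] by simp
qed

lemma nth_deriv_leibniz:
  fixes f g :: "complex fps"
  shows "fps_nth_deriv n (f * g) = (\<Sum>k\<le>n. of_nat (n choose k) * (fps_nth_deriv k f * fps_nth_deriv (n - k) g))"
proof (induction n)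
  case 0 then show ?case by simp
next
  case (Suc n)
  define a where "a k = fps_nth_deriv k f * fps_nth_deriv (Suc n - k) g" for k
  have "fps_nth_deriv (Suc n) (f * g) = fps_deriv (fps_nth_deriv n (f * g))"
    by (simp add: fps_nth_deriv_commute del: fps_nth_deriv.simps(2))
  also have "\<dots> = (\<Sum>k\<le>n. of_nat (n choose k) * (fps_nth_deriv (Suc k) f * fps_nth_deriv (n - k) g))
      + (\<Sum>k\<le>n. of_nat (n choose k) * (fps_nth_deriv k f * fps_nth_deriv (Suc (n - k)) g))"
    unfolding Suc fps_deriv_sum
    by (simp add: fps_nth_deriv_commute algebra_simps sum.distrib del: fps_nth_deriv.simps(2))
  also have "\<dots> = (\<Sum>k\<le>n. of_nat (n choose k) * a (Suc k)) + (\<Sum>k\<le>n. of_nat (n choose k) * a k)"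
    by (intro arg_cong2[where f="(+)"] sum.cong) (auto simp: a_def Suc_diff_le)
  also have "\<dots> = (\<Sum>k\<le>Suc n. of_nat (Suc n choose k) * a k)"
  proof -
    have h1: "(\<Sum>k\<le>Suc n. of_nat (Suc n choose k) * a k) = a 0 + (\<Sum>k\<le>n. of_nat (Suc n choose Suc k) * a (Suc k))"
      by (subst sum.atMost_Suc_shift) simp
    also have "\<dots> = a 0 + (\<Sum>k\<le>n. of_nat (n choose Suc k) * a (Suc k)) + (\<Sum>k\<le>n. of_nat (n choose k) * a (Suc k))"
      by (simp add: sum.distrib algebra_simps)
    finally have h2: "(\<Sum>k\<le>Suc n. of_nat (Suc n choose k) * a k) = a 0 + (\<Sum>k\<le>n. of_nat (n choose Suc k) * a (Suc k)) + (\<Sum>k\<le>n. of_nat (n choose k) * a (Suc k))" .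
    have h3: "a 0 + (\<Sum>k\<le>n. of_nat (n choose Suc k) * a (Suc k)) = (\<Sum>k\<le>Suc n. of_nat (n choose k) * a k)"
      by (subst sum.atMost_Suc_shift) simp
    have h4: "(\<Sum>k\<le>Suc n. of_nat (n choose k) * a k) = (\<Sum>k\<le>n. of_nat (n choose k) * a k)"
      by simp
    show ?thesis using h2 h3 h4 by (simp add: algebra_simps)
  qed
  finally show ?case by (simp add: a_def)
qed

lemma nth_deriv_nth:
  "fps_nth (fps_nth_deriv k (f :: complex fps)) n = fps_nth f (n + k) * fact (n + k) / fact n"
proof (induction k arbitrary: f n)
  case 0 then show ?case by simp
next
  case (Suc k)
  have "fps_nth (fps_nth_deriv (Suc k) f) n = fps_nth (fps_nth_deriv k (fps_deriv f)) n" by simp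
  also have "\<dots> = of_nat (n + k + 1) * fps_nth f (n + k + 1) * fact (n + k) / fact n"
    by (simp add: Suc)
  also have "\<dots> = fps_nth f (n + Suc k) * fact (n + Suc k) / fact n"
    by (simp add: algebra_simps)
  finally show ?case .
qed

subsection \<open>Bivariate series\<close>

lemma fps_const_sum: "fps_const (sum f A) = (\<Sum>x\<in>A. fps_const (f x))"
  by (induction A rule: infinite_finite_induct) (auto simp: fps_const_add[symmetric] simp del: fps_const_add)

type_synonym bfps = "complex fps fps"

definition S :: "complex fps \<Rightarrow> bfps" where
  "S f = Abs_fps (\<lambda>m. fps_const (fps_nth f m))"

definition U :: "complex fps \<Rightarrow> bfps" where
  "U f = Abs_fps (\<lambda>m. fps_const ((-1) ^ m / fact m) * fps_nth_deriv m f)"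

lemma S_nth: "fps_nth (S f) m = fps_const (fps_nth f m)"
  by (simp add: S_def)

lemma S_mult: "S (f * g) = S f * S g"
  by (rule fps_ext) (simp add: S_nth fps_mult_nth fps_const_sum[symmetric] fps_const_mult)

lemma S_add: "S (f + g) = S f + S g"
  by (rule fps_ext) (simp add: S_nth)
lemma S_diff: "S (f - g) = S f - S g"
  by (rule fps_ext) (simp add: S_nth)
lemma S_const: "S (fps_const c) = fps_const (fps_const c)"
  by (rule fps_ext) (simp add: S_nth)
lemma S_1: "S 1 = 1"
  using S_const[of 1] by simp
lemma S_X: "S fps_X = fps_X"
  by (rule fps_ext) (simp add: S_nth)

lemma U_nth: "fps_nth (U f) m = fps_const ((-1) ^ m / fact m) * fps_nth_deriv m f"
  by (simp add: U_def)

lemma U_mult: "U (f * g) = U f * U g"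
proof (rule fps_ext)
  fix m
  have "fps_nth (U (f * g)) m = (\<Sum>k\<le>m. fps_const ((-1) ^ m / fact m) * (of_nat (m choose k) * (fps_nth_deriv k f * fps_nth_deriv (m - k) g)))"
    by (simp add: U_nth nth_deriv_leibniz sum_distrib_left)
  also have "\<dots> = (\<Sum>k\<le>m. fps_const ((-1) ^ m / fact m * of_nat (m choose k)) * (fps_nth_deriv k f * fps_nth_deriv (m - k) g))"
  proof (rule sum.cong[OF refl])
    fix k
    have "(of_nat (m choose k) :: complex fps) = fps_const (of_nat (m choose k))" by (simp add: fps_of_nat)
    thus "fps_const ((-1) ^ m / fact m) * (of_nat (m choose k) * (fps_nth_deriv k f * fps_nth_deriv (m - k) g)) =
      fps_const ((-1) ^ m / fact m * of_nat (m choose k)) * (fps_nth_deriv k f * fps_nth_deriv (m - k) g)"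
      by (simp add: mult.assoc[symmetric])
  qed
  also have "\<dots> = (\<Sum>k\<le>m. fps_const ((-1) ^ k / fact k) * fps_nth_deriv k f * (fps_const ((-1) ^ (m - k) / fact (m - k)) * fps_nth_deriv (m - k) g))"
  proof (rule sum.cong[OF refl])
    fix k assume "k \<in> {..m}"
    hence km: "k \<le> m" by simp
    have "(-1::complex) ^ m / fact m * of_nat (m choose k) = (-1) ^ k / fact k * ((-1) ^ (m - k) / fact (m - k))"
      using km by (simp add: binomial_fact power_add[symmetric] field_simps)
    thus "fps_const ((-1) ^ m / fact m * of_nat (m choose k)) * (fps_nth_deriv k f * fps_nth_deriv (m - k) g) =
       fps_const ((-1) ^ k / fact k) * fps_nth_deriv k f * (fps_const ((-1) ^ (m - k) / fact (m - k)) * fps_nth_deriv (m - k) g)"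
      by (simp add: algebra_simps)
  qed
  also have "\<dots> = fps_nth (U f * U g) m"
    by (simp add: fps_mult_nth U_nth atMost_atLeast0)
  finally show "fps_nth (U (f * g)) m = fps_nth (U f * U g) m" .
qed

lemma U_add: "U (f + g) = U f + U g"
  by (rule fps_ext) (simp add: U_nth algebra_simps)
lemma U_diff: "U (f - g) = U f - U g"
  by (rule fps_ext) (simp add: U_nth algebra_simps)
lemma U_const: "U (fps_const c) = fps_const (fps_const c)"
  by (rule fps_ext) (simp add: U_nth)
lemma U_1: "U 1 = 1"
  using U_const[of 1] by simp
lemma U_X: "U fps_X = fps_const fps_X - fps_X"
proof (rule fps_ext)
  fix m
  show "fps_nth (U fps_X) m = fps_nth (fps_const fps_X - fps_X) m"
    by (cases m) (auto simp: U_nth fps_const_neg[symmetric] simp del: fps_const_neg)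
qed

lemma U_exp: "U (fps_exp c) = S (fps_exp (- c)) * fps_const (fps_exp c)"
  by (rule fps_ext) (simp add: U_nth S_nth power_minus' mult.assoc)

lemma S_2: "S 2 = 2"
  using S_const[of 2] by (simp add: numeral_fps_const)
lemma U_2: "U 2 = 2"
  using U_const[of 2] by (simp add: numeral_fps_const)

lemma S_eq_0: "S f = 0 \<longleftrightarrow> f = 0"
proof
  assume "S f = 0"
  hence "\<forall>m. fps_nth (S f) m = 0" by simp
  hence "\<forall>m. fps_nth f m = 0" by (simp add: S_nth)
  thus "f = 0" by (simp add: fps_eq_iff)
qed (simp add: S_const[of 0, simplified])

lemma U_nz: "f \<noteq> 0 \<Longrightarrow> U f \<noteq> 0"
proof
  assume "f \<noteq> 0" "U f = 0"
  hence "fps_nth (U f) 0 = 0" by simp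
  hence "f = 0" by (simp add: U_nth)
  with \<open>f \<noteq> 0\<close> show False by simp
qed

abbreviation tX :: bfps where "tX \<equiv> fps_const fps_X"

lemma SB: "S (fps_exp 1 - 1) * S (bB x) = fps_X * S (fps_exp x)"
  by (simp only: S_mult[symmetric] F1) (simp only: S_mult S_X)
lemma SE: "S (fps_exp 1 + 1) * S (bE x) = 2 * S (fps_exp x)"
  by (simp only: S_mult[symmetric] F2) (simp only: S_mult S_2)
lemma TB: "fps_const (fps_exp 1 - 1) * fps_const (bB x) = tX * fps_const (fps_exp x)"
  by (simp only: fps_const_mult F1)
lemma TE: "fps_const (fps_exp 1 + 1) * fps_const (bE x) = 2 * fps_const (fps_exp x)"
  by (simp only: fps_const_mult F2) (simp only: fps_const_mult[symmetric] fps_numeral_fps_const[symmetric])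
lemma UB: "U (fps_exp 1 - 1) * U (bB x) = (tX - fps_X) * (S (fps_exp (-x)) * fps_const (fps_exp x))"
  by (simp only: U_mult[symmetric] F1) (simp only: U_mult U_X U_exp)
lemma UE: "U (fps_exp 1 + 1) * U (bE x) = 2 * (S (fps_exp (-x)) * fps_const (fps_exp x))"
  by (simp only: U_mult[symmetric] F2) (simp only: U_mult U_2 U_exp)
lemma Ua: "U (fps_exp 1 - 1) = S (fps_exp (-1)) * fps_const (fps_exp 1) - 1"
  by (simp add: U_diff U_exp U_1)
lemma Ub: "U (fps_exp 1 + 1) = S (fps_exp (-1)) * fps_const (fps_exp 1) + 1"
  by (simp add: U_add U_exp U_1)
lemma Ta: "fps_const (fps_exp 1 - 1) = fps_const (fps_exp (1::complex)) - 1"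
  by (metis fps_const_1_eq_1 fps_const_sub)
lemma Tb: "fps_const (fps_exp 1 + 1) = fps_const (fps_exp (1::complex)) + 1"
  by (metis fps_const_1_eq_1 fps_const_add)
lemma Sa: "S (fps_exp 1 - 1) = S (fps_exp 1) - 1"
  by (simp add: S_diff S_1)
lemma Sb: "S (fps_exp 1 + 1) = S (fps_exp 1) + 1"
  by (simp add: S_add S_1)

lemma S_exp_add: "S (fps_exp (a + b)) = S (fps_exp a) * S (fps_exp b)"
  by (simp add: exp_add S_mult)
lemma T_exp_add: "fps_const (fps_exp (a + b)) = fps_const (fps_exp a) * fps_const (fps_exp (b::complex))"
  by (simp add: exp_add)
lemma S_exp_inv: "S (fps_exp (- a)) * S (fps_exp a) = 1"
  by (simp add: S_mult[symmetric] exp_add[symmetric] S_1)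
lemma T_exp_inv: "fps_const (fps_exp (- a)) * fps_const (fps_exp (a::complex)) = 1"
  by (simp add: exp_add[symmetric])

lemma GA_alg:
  fixes t s Sx Sy Smx S1 Sm1 Tx T1 T1y T1z S1z Sy1 Bz Ux Tz Uy Tbx Sby Sa Ta Ua :: "'a::idom"
  assumes "Sa*Bz = s*S1z" "Ua*Ux = (t-s)*(Smx*Tx)" "Ta*Tz = t*T1z" "Ua*Uy = (t-s)*(Sy1*T1y)"
   "Ta*Tbx = t*Tx" "Sa*Sby = s*Sy" "Ua = Sm1*T1 - 1" "Sa = S1 - 1" "Ta = T1 - 1" "S1z = Sx*Sy"
   "Sy1 = Sy*Sm1" "T1y*T1z = T1*Tx" "Smx*Sx = 1" "Sm1*S1 = 1"
   and nz: "Sa \<noteq> 0" "Ta \<noteq> 0" "Ua \<noteq> 0"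
  shows "t*(Bz*Ux) - s*(Tz*Uy) = (t-s)*(Tbx*Sby)"
proof -
  have "(t*(Bz*Ux) - s*(Tz*Uy))*(Sa*Ta*Ua) = (t-s)*(Tbx*Sby)*(Sa*Ta*Ua)"
    using assms(1-14) by algebra
  with nz show ?thesis by simp
qed

lemma GA:
  assumes xyz: "x + y + z = 1"
  shows "tX * (S (negf (bB z)) * U (bB x)) - fps_X * (fps_const (negf (bB z)) * U (negf (bB y)))
       = (tX - fps_X) * (fps_const (bB x) * S (bB y))"
proof -
  have z: "1 - z = x + y" and y: "-(1 - y) = y + (-1)" and yz: "(1 - y) + (1 - z) = 1 + x"
    using xyz by (auto simp: algebra_simps)
  have e1: "S (fps_exp (1 - z)) = S (fps_exp x) * S (fps_exp y)" unfolding z by (rule S_exp_add)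
  have e2: "S (fps_exp (-(1 - y))) = S (fps_exp y) * S (fps_exp (-1))" unfolding y by (rule S_exp_add)
  have e3: "fps_const (fps_exp (1 - y)) * fps_const (fps_exp (1 - z)) = fps_const (fps_exp 1) * fps_const (fps_exp x)"
    using T_exp_add[of "1 - y" "1 - z"] T_exp_add[of 1 x] unfolding yz by simp
  show ?thesis
    unfolding negf_bB
    by (rule GA_alg[OF SB[of "1 - z"] UB[of x] TB[of "1 - z"] UB[of "1 - y"] TB[of x] SB[of y] Ua Sa Ta e1 e2 e3
          S_exp_inv S_exp_inv])
       (use exp1_m1_nz in \<open>simp_all add: S_eq_0 U_nz\<close>)
qed

lemma GB_alg:
  fixes t s Sx Sy Smx S1 Sm1 Tx T1 T1y T1z S1z Sy1 Ux Ez Uy Tz Tbx Sby Ua Sb Tb :: "'a::idom"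
  assumes "Ua*Ux = (t-s)*(Smx*Tx)" "Sb*Ez = 2*S1z" "Ua*Uy = (t-s)*(Sy1*T1y)" "Tb*Tz = 2*T1z"
   "Tb*Tbx = 2*Tx" "Sb*Sby = 2*Sy" "Ua = Sm1*T1 - 1" "Sb = S1 + 1" "Tb = T1 + 1" "S1z = Sx*Sy"
   "Sy1 = Sy*Sm1" "T1y*T1z = T1*Tx" "Smx*Sx = 1" "Sm1*S1 = 1"
   and nz: "Ua \<noteq> 0" "Sb \<noteq> 0" "Tb \<noteq> 0"
  shows "2 * (Ux*Ez - Uy*Tz) = (s-t)*(Tbx*Sby)"
proof -
  have "2 * (Ux*Ez - Uy*Tz) * (Ua*Sb*Tb) = (s-t)*(Tbx*Sby) * (Ua*Sb*Tb)"
    using assms(1-14) by algebra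
  with nz show ?thesis by simp
qed

lemma GB:
  assumes xyz: "x + y + z = 1"
  shows "2 * (U (bB x) * S (negf (bE z)) - U (negf (bB y)) * fps_const (negf (bE z)))
       = (fps_X - tX) * (fps_const (bE x) * S (bE y))"
proof -
  have z: "1 - z = x + y" and y: "-(1 - y) = y + (-1)" and yz: "(1 - y) + (1 - z) = 1 + x"
    using xyz by (auto simp: algebra_simps)
  have e1: "S (fps_exp (1 - z)) = S (fps_exp x) * S (fps_exp y)" unfolding z by (rule S_exp_add)
  have e2: "S (fps_exp (-(1 - y))) = S (fps_exp y) * S (fps_exp (-1))" unfolding y by (rule S_exp_add)
  have e3: "fps_const (fps_exp (1 - y)) * fps_const (fps_exp (1 - z)) = fps_const (fps_exp 1) * fps_const (fps_exp x)"
    using T_exp_add[of "1 - y" "1 - z"] T_exp_add[of 1 x] unfolding yz by simp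
  have nz: "U (fps_exp 1 - 1) \<noteq> 0" "S (fps_exp 1 + 1) \<noteq> 0" "fps_const (fps_exp 1 + 1) \<noteq> (0::bfps)"
    using exp1_m1_nz exp_p1_nz[of 1] by (simp_all add: S_eq_0 U_nz)
  show ?thesis
    unfolding negf_bB negf_bE
    by (rule GB_alg[OF UB[of x] SE[of "1 - z"] UB[of "1 - y"] TE[of "1 - z"] TE[of x] SE[of y] Ua Sb Tb e1 e2 e3
          S_exp_inv S_exp_inv nz])
qed

lemma GC_alg:
  fixes s Sx Sz Smz S1 Sm1 Tz T1 T1y T1x S1y Sm1x Bx Ez By Uz Ey Ux Sa Tb Ub :: "'a::idom"
  assumes "Sa*Bx = s*Sx" "Tb*Ez = 2*Tz" "Sa*By = s*S1y" "Ub*Uz = 2*(Smz*Tz)"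
   "Tb*Ey = 2*T1y" "Ub*Ux = 2*(Sm1x*T1x)" "Ub = Sm1*T1 + 1" "Sa = S1 - 1" "Tb = T1 + 1"
   "S1y = Sx*Sz" "Smz*Sz = 1" "T1y*T1x = T1*Tz" "Sm1x = Sx*Sm1" "Sm1*S1 = 1"
   and nz: "Sa \<noteq> 0" "Tb \<noteq> 0" "Ub \<noteq> 0"
  shows "2 * (Bx*Ez - By*Uz) = - (s*(Ey*Ux))"
proof -
  have "(2 * (Bx*Ez - By*Uz) + s*(Ey*Ux)) * (Sa*Tb*Ub) = 0"
    using assms(1-14) by algebra
  with nz have "2 * (Bx*Ez - By*Uz) + s*(Ey*Ux) = 0" by simp
  thus ?thesis by (simp add: eq_neg_iff_add_eq_0)
qed

lemma GC:
  assumes xyz: "x + y + z = 1"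
  shows "2 * (S (bB x) * fps_const (bE z) - S (negf (bB y)) * U (bE z))
       = - (fps_X * (fps_const (negf (bE y)) * U (negf (bE x))))"
proof -
  have y: "1 - y = x + z" and x: "-(1 - x) = x + (-1)" and xy: "(1 - y) + (1 - x) = 1 + z"
    using xyz by (auto simp: algebra_simps)
  have e1: "S (fps_exp (1 - y)) = S (fps_exp x) * S (fps_exp z)" unfolding y by (rule S_exp_add)
  have e2: "S (fps_exp (-(1 - x))) = S (fps_exp x) * S (fps_exp (-1))" unfolding x by (rule S_exp_add)
  have e3: "fps_const (fps_exp (1 - y)) * fps_const (fps_exp (1 - x)) = fps_const (fps_exp 1) * fps_const (fps_exp z)"
    using T_exp_add[of "1 - y" "1 - x"] T_exp_add[of 1 z] unfolding xy by simp
  have nz: "S (fps_exp 1 - 1) \<noteq> 0" "fps_const (fps_exp 1 + 1) \<noteq> (0::bfps)" "U (fps_exp 1 + 1) \<noteq> 0"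
    using exp1_m1_nz exp_p1_nz[of 1] by (simp_all add: S_eq_0 U_nz)
  show ?thesis
    unfolding negf_bB negf_bE
    by (rule GC_alg[OF SB[of x] TE[of z] SB[of "1 - y"] UE[of z] TE[of "1 - y"] UE[of "1 - x"] Ub Sa Tb e1
          S_exp_inv e3 e2 S_exp_inv nz])
qed

lemma U_abs_nth:
  "fps_nth (fps_nth (U (Abs_fps (\<lambda>r. a r / fact r))) m) n = (-1) ^ m / (fact m * fact n) * a (n + m)"
  by (simp add: U_nth nth_deriv_nth)

lemma SG_nth:
  fixes G :: bfps shows "fps_nth (fps_nth (S f * G) m) n = (\<Sum>i=0..m. fps_nth f i * fps_nth (fps_nth G (m - i)) n)"
  unfolding fps_mult_nth[of "S f" G] fps_sum_nth S_nth by simp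

lemma TG_nth:
  fixes G :: bfps shows "fps_nth (fps_nth (fps_const g * G) m) n = (\<Sum>j=0..n. fps_nth g j * fps_nth (fps_nth G m) (n - j))"
  unfolding fps_mult_left_const_nth by (rule fps_mult_nth)

lemma TS_nth:
  "fps_nth (fps_nth (fps_const g * S f) m) n = fps_nth g n * fps_nth f m"
  by (simp add: S_nth mult.commute)

lemma tX_nth:
  fixes G :: bfps shows "fps_nth (fps_nth (tX * G) m) n = (if n = 0 then 0 else fps_nth (fps_nth G m) (n - 1))"
  by simp

lemma sX_nth:
  fixes G :: bfps shows "fps_nth (fps_nth (fps_X * G) m) n = (if m = 0 then 0 else fps_nth (fps_nth G (m - 1)) n)"
  by (cases m) simp_all

lemma bB_nth: "fps_nth (bB x) r = bernpoly r x / fact r" by (simp add: bB_def)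
lemma bE_nth: "fps_nth (bE x) r = eulpoly r x / fact r" by (simp add: bE_def)
lemma negf_bB_nth: "fps_nth (negf (bB x)) r = (-1) ^ r * bernpoly r x / fact r" by (simp add: negf_nth bB_def)
lemma negf_bE_nth: "fps_nth (negf (bE x)) r = (-1) ^ r * eulpoly r x / fact r" by (simp add: negf_nth bE_def)
lemma negf_abs: "negf (Abs_fps (\<lambda>r. a r / fact r :: complex)) = Abs_fps (\<lambda>r. ((-1) ^ r * a r) / fact r)"
  by (simp add: negf_def)

lemma U_bB_nth: "fps_nth (fps_nth (U (bB x)) m) n = (-1) ^ m / (fact m * fact n) * bernpoly (n + m) x"
  unfolding bB_def by (rule U_abs_nth)
lemma U_bE_nth: "fps_nth (fps_nth (U (bE x)) m) n = (-1) ^ m / (fact m * fact n) * eulpoly (n + m) x"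
  unfolding bE_def by (rule U_abs_nth)
lemma U_negf_bB_nth: "fps_nth (fps_nth (U (negf (bB x))) m) n = (-1) ^ m / (fact m * fact n) * ((-1) ^ (n + m) * bernpoly (n + m) x)"
  unfolding bB_def negf_abs by (rule U_abs_nth)
lemma U_negf_bE_nth: "fps_nth (fps_nth (U (negf (bE x))) m) n = (-1) ^ m / (fact m * fact n) * ((-1) ^ (n + m) * eulpoly (n + m) x)"
  unfolding bE_def negf_abs by (rule U_abs_nth)

lemma sum_rev0: "(\<Sum>i=0..(m::nat). f i) = (\<Sum>k=0..m. f (m - k))"
  using sum.atLeastAtMost_rev[of f 0 m] by simp

lemma sign_split: "i \<le> m \<Longrightarrow> (-1::complex) ^ i * (-1) ^ (m - i) = (-1) ^ m"
  by (simp add: power_add[symmetric])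

lemma fact_div: "i \<le> m \<Longrightarrow> (fact m :: complex) / (fact i * fact (m - i)) = of_nat (m choose i)"
  by (simp add: binomial_fact)

lemma baseA:
  assumes xyz: "x + y + z = 1" and m: "0 < m" and n: "0 < n"
  shows "of_nat n * (-1) ^ m * (\<Sum>k=0..m. of_nat (m choose k) * bernpoly (n - 1 + k) x * bernpoly (m - k) z)
       - of_nat m * (-1) ^ n * (\<Sum>k=0..n. of_nat (n choose k) * bernpoly (m - 1 + k) y * bernpoly (n - k) z)
       = of_nat n * bernpoly (n - 1) x * bernpoly m y - of_nat m * bernpoly n x * bernpoly (m - 1) y"
proof -
  obtain m' where m': "m = Suc m'" using m by (cases m) auto
  obtain n' where n': "n = Suc n'" using n by (cases n) auto
  have G: "fps_nth (fps_nth (tX * (S (negf (bB z)) * U (bB x)) - fps_X * (fps_const (negf (bB z)) * U (negf (bB y)))) m) n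
     = fps_nth (fps_nth ((tX - fps_X) * (fps_const (bB x) * S (bB y))) m) n"
    using GA[OF xyz] by simp
  have h1: "fps_nth (fps_nth (tX * (S (negf (bB z)) * U (bB x))) m) n
     = (\<Sum>i=0..m. (-1) ^ i * bernpoly i z / fact i * ((-1) ^ (m - i) / (fact (m - i) * fact n') * bernpoly (n' + (m - i)) x))"
    unfolding tX_nth SG_nth using n' by (simp add: negf_bB_nth U_bB_nth)
  have h2: "fps_nth (fps_nth (fps_X * (fps_const (negf (bB z)) * U (negf (bB y)))) m) n
     = (\<Sum>j=0..n. (-1) ^ j * bernpoly j z / fact j * ((-1) ^ m' / (fact m' * fact (n - j)) * ((-1) ^ (n - j + m') * bernpoly (n - j + m') y)))"
    unfolding sX_nth TG_nth using m' by (simp add: negf_bB_nth U_negf_bB_nth)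
  have h3: "fps_nth (fps_nth ((tX - fps_X) * (fps_const (bB x) * S (bB y))) m) n
     = bernpoly n' x / fact n' * (bernpoly m y / fact m) - bernpoly n x / fact n * (bernpoly m' y / fact m')"
    unfolding left_diff_distrib fps_sub_nth tX_nth sX_nth TS_nth using m' n' by (simp add: bB_nth)
  have fm: "fact m = of_nat m * (fact m' :: complex)" "fact n = of_nat n * (fact n' :: complex)"
    using m' n' by (simp_all add: fact_reduce)
  have s1: "fact m * fact n * (\<Sum>i=0..m. (-1) ^ i * bernpoly i z / fact i * ((-1) ^ (m - i) / (fact (m - i) * fact n') * bernpoly (n' + (m - i)) x))
     = of_nat n * (-1) ^ m * (\<Sum>k=0..m. of_nat (m choose k) * bernpoly (n - 1 + k) x * bernpoly (m - k) z)"
  proof -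
    have "fact m * fact n * (\<Sum>i=0..m. (-1) ^ i * bernpoly i z / fact i * ((-1) ^ (m - i) / (fact (m - i) * fact n') * bernpoly (n' + (m - i)) x))
      = of_nat n * (-1) ^ m * (\<Sum>i=0..m. of_nat (m choose i) * bernpoly (n' + (m - i)) x * bernpoly i z)"
      unfolding sum_distrib_left
    proof (rule sum.cong[OF refl])
      fix i assume "i \<in> {0..m}"
      hence i: "i \<le> m" by simp
      have "fact m * fact n * ((-1) ^ i * bernpoly i z / fact i * ((-1) ^ (m - i) / (fact (m - i) * fact n') * bernpoly (n' + (m - i)) x))
         = of_nat n * ((-1) ^ i * (-1) ^ (m - i)) * (fact m / (fact i * fact (m - i))) * bernpoly (n' + (m - i)) x * bernpoly i z"
        using fm by (simp add: field_simps)
      also have "\<dots> = of_nat n * (-1) ^ m * (of_nat (m choose i) * bernpoly (n' + (m - i)) x * bernpoly i z)"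
        using i by (simp add: sign_split fact_div)
      finally show "fact m * fact n * ((-1) ^ i * bernpoly i z / fact i * ((-1) ^ (m - i) / (fact (m - i) * fact n') * bernpoly (n' + (m - i)) x))
         = of_nat n * (-1) ^ m * (of_nat (m choose i) * bernpoly (n' + (m - i)) x * bernpoly i z)" .
    qed
    also have "(\<Sum>i=0..m. of_nat (m choose i) * bernpoly (n' + (m - i)) x * bernpoly i z)
       = (\<Sum>k=0..m. of_nat (m choose k) * bernpoly (n - 1 + k) x * bernpoly (m - k) z)"
      by (subst sum_rev0) (rule sum.cong, auto simp: n' binomial_symmetric[symmetric])
    finally show ?thesis .
  qed
  have s2: "fact m * fact n * (\<Sum>j=0..n. (-1) ^ j * bernpoly j z / fact j * ((-1) ^ m' / (fact m' * fact (n - j)) * ((-1) ^ (n - j + m') * bernpoly (n - j + m') y)))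
     = of_nat m * (-1) ^ n * (\<Sum>k=0..n. of_nat (n choose k) * bernpoly (m - 1 + k) y * bernpoly (n - k) z)"
  proof -
    have "fact m * fact n * (\<Sum>j=0..n. (-1) ^ j * bernpoly j z / fact j * ((-1) ^ m' / (fact m' * fact (n - j)) * ((-1) ^ (n - j + m') * bernpoly (n - j + m') y)))
      = of_nat m * (-1) ^ n * (\<Sum>j=0..n. of_nat (n choose j) * bernpoly (n - j + m') y * bernpoly j z)"
      unfolding sum_distrib_left
    proof (rule sum.cong[OF refl])
      fix j assume "j \<in> {0..n}"
      hence j: "j \<le> n" by simp
      have sg: "(-1::complex) ^ j * ((-1) ^ m' * (-1) ^ (n - j + m')) = (-1) ^ n"
        using j by (simp add: power_add[symmetric]) (simp add: power_add power_mult[symmetric] mult.commute[of 2] sign_split)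
      have "fact m * fact n * ((-1) ^ j * bernpoly j z / fact j * ((-1) ^ m' / (fact m' * fact (n - j)) * ((-1) ^ (n - j + m') * bernpoly (n - j + m') y)))
         = of_nat m * ((-1) ^ j * ((-1) ^ m' * (-1) ^ (n - j + m'))) * (fact n / (fact j * fact (n - j))) * bernpoly (n - j + m') y * bernpoly j z"
        using fm by (simp add: field_simps)
      also have "\<dots> = of_nat m * (-1) ^ n * (of_nat (n choose j) * bernpoly (n - j + m') y * bernpoly j z)"
        unfolding sg fact_div[OF j] by (simp add: mult.assoc)
      finally show "fact m * fact n * ((-1) ^ j * bernpoly j z / fact j * ((-1) ^ m' / (fact m' * fact (n - j)) * ((-1) ^ (n - j + m') * bernpoly (n - j + m') y)))
         = of_nat m * (-1) ^ n * (of_nat (n choose j) * bernpoly (n - j + m') y * bernpoly j z)" .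
    qed
    also have "(\<Sum>j=0..n. of_nat (n choose j) * bernpoly (n - j + m') y * bernpoly j z)
       = (\<Sum>k=0..n. of_nat (n choose k) * bernpoly (m - 1 + k) y * bernpoly (n - k) z)"
      by (subst sum_rev0) (rule sum.cong, auto simp: m' binomial_symmetric[symmetric] add.commute)
    finally show ?thesis .
  qed
  have s3: "fact m * fact n * (bernpoly n' x / fact n' * (bernpoly m y / fact m) - bernpoly n x / fact n * (bernpoly m' y / fact m'))
     = of_nat n * bernpoly (n - 1) x * bernpoly m y - of_nat m * bernpoly n x * bernpoly (m - 1) y"
  proof -
    have "n - 1 = n'" "m - 1 = m'" using m' n' by simp_all
    thus ?thesis using fm m n by (simp add: field_simps)
  qed
  from G have "fact m * fact n * (fps_nth (fps_nth (tX * (S (negf (bB z)) * U (bB x))) m) n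
      - fps_nth (fps_nth (fps_X * (fps_const (negf (bB z)) * U (negf (bB y)))) m) n)
     = fact m * fact n * fps_nth (fps_nth ((tX - fps_X) * (fps_const (bB x) * S (bB y))) m) n"
    by simp
  hence "of_nat n * (-1) ^ m * (\<Sum>k=0..m. of_nat (m choose k) * bernpoly (n - 1 + k) x * bernpoly (m - k) z)
       - of_nat m * (-1) ^ n * (\<Sum>k=0..n. of_nat (n choose k) * bernpoly (m - 1 + k) y * bernpoly (n - k) z)
       = fact m * fact n * (bernpoly n' x / fact n' * (bernpoly m y / fact m) - bernpoly n x / fact n * (bernpoly m' y / fact m'))"
    unfolding h1 h2 h3 right_diff_distrib[of "fact m * fact n"] s1 s2 .
  thus ?thesis unfolding s3 .
qed

lemma two_nth: "fps_nth (fps_nth (2 * (F::bfps)) m) n = 2 * fps_nth (fps_nth F m) n"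
  by (simp add: numeral_fps_const)

lemma baseB:
  assumes xyz: "x + y + z = 1" and m: "0 < m" and n: "0 < n"
  shows "2 * ((-1) ^ m * (\<Sum>k=0..m. of_nat (m choose k) * bernpoly (n + k) x * eulpoly (m - k) z)
       - (-1) ^ n * (\<Sum>k=0..n. of_nat (n choose k) * bernpoly (m + k) y * eulpoly (n - k) z))
       = of_nat m * eulpoly n x * eulpoly (m - 1) y - of_nat n * eulpoly (n - 1) x * eulpoly m y"
proof -
  obtain m' where m': "m = Suc m'" using m by (cases m) auto
  obtain n' where n': "n = Suc n'" using n by (cases n) auto
  have G: "fps_nth (fps_nth (2 * (S (negf (bE z)) * U (bB x) - fps_const (negf (bE z)) * U (negf (bB y)))) m) n
     = fps_nth (fps_nth ((fps_X - tX) * (fps_const (bE x) * S (bE y))) m) n"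
    using GB[OF xyz] by (simp add: mult.commute)
  have h1: "fps_nth (fps_nth (S (negf (bE z)) * U (bB x)) m) n
     = (\<Sum>i=0..m. (-1) ^ i * eulpoly i z / fact i * ((-1) ^ (m - i) / (fact (m - i) * fact n) * bernpoly (n + (m - i)) x))"
    unfolding SG_nth by (simp add: negf_bE_nth U_bB_nth)
  have h2: "fps_nth (fps_nth (fps_const (negf (bE z)) * U (negf (bB y))) m) n
     = (\<Sum>j=0..n. (-1) ^ j * eulpoly j z / fact j * ((-1) ^ m / (fact m * fact (n - j)) * ((-1) ^ (n - j + m) * bernpoly (n - j + m) y)))"
    unfolding TG_nth by (simp add: negf_bE_nth U_negf_bB_nth)
  have h3: "fps_nth (fps_nth ((fps_X - tX) * (fps_const (bE x) * S (bE y))) m) n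
     = eulpoly n x / fact n * (eulpoly m' y / fact m') - eulpoly n' x / fact n' * (eulpoly m y / fact m)"
    unfolding left_diff_distrib fps_sub_nth tX_nth sX_nth TS_nth using m' n' by (simp add: bE_nth)
  have fm: "fact m = of_nat m * (fact m' :: complex)" "fact n = of_nat n * (fact n' :: complex)"
    using m' n' by (simp_all add: fact_reduce)
  have s1: "fact m * fact n * (\<Sum>i=0..m. (-1) ^ i * eulpoly i z / fact i * ((-1) ^ (m - i) / (fact (m - i) * fact n) * bernpoly (n + (m - i)) x))
     = (-1) ^ m * (\<Sum>k=0..m. of_nat (m choose k) * bernpoly (n + k) x * eulpoly (m - k) z)"
  proof -
    have "fact m * fact n * (\<Sum>i=0..m. (-1) ^ i * eulpoly i z / fact i * ((-1) ^ (m - i) / (fact (m - i) * fact n) * bernpoly (n + (m - i)) x))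
      = (-1) ^ m * (\<Sum>i=0..m. of_nat (m choose i) * bernpoly (n + (m - i)) x * eulpoly i z)"
      unfolding sum_distrib_left
    proof (rule sum.cong[OF refl])
      fix i assume "i \<in> {0..m}"
      hence i: "i \<le> m" by simp
      have "fact m * fact n * ((-1) ^ i * eulpoly i z / fact i * ((-1) ^ (m - i) / (fact (m - i) * fact n) * bernpoly (n + (m - i)) x))
         = ((-1) ^ i * (-1) ^ (m - i)) * (fact m / (fact i * fact (m - i))) * bernpoly (n + (m - i)) x * eulpoly i z"
        by (simp add: field_simps)
      also have "\<dots> = (-1) ^ m * (of_nat (m choose i) * bernpoly (n + (m - i)) x * eulpoly i z)"
        unfolding sign_split[OF i] fact_div[OF i] by (simp add: mult.assoc)
      finally show "fact m * fact n * ((-1) ^ i * eulpoly i z / fact i * ((-1) ^ (m - i) / (fact (m - i) * fact n) * bernpoly (n + (m - i)) x))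
         = (-1) ^ m * (of_nat (m choose i) * bernpoly (n + (m - i)) x * eulpoly i z)" .
    qed
    also have "(\<Sum>i=0..m. of_nat (m choose i) * bernpoly (n + (m - i)) x * eulpoly i z)
       = (\<Sum>k=0..m. of_nat (m choose k) * bernpoly (n + k) x * eulpoly (m - k) z)"
      by (subst sum_rev0) (rule sum.cong, auto simp: binomial_symmetric[symmetric])
    finally show ?thesis .
  qed
  have s2: "fact m * fact n * (\<Sum>j=0..n. (-1) ^ j * eulpoly j z / fact j * ((-1) ^ m / (fact m * fact (n - j)) * ((-1) ^ (n - j + m) * bernpoly (n - j + m) y)))
     = (-1) ^ n * (\<Sum>k=0..n. of_nat (n choose k) * bernpoly (m + k) y * eulpoly (n - k) z)"
  proof -
    have "fact m * fact n * (\<Sum>j=0..n. (-1) ^ j * eulpoly j z / fact j * ((-1) ^ m / (fact m * fact (n - j)) * ((-1) ^ (n - j + m) * bernpoly (n - j + m) y)))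
      = (-1) ^ n * (\<Sum>j=0..n. of_nat (n choose j) * bernpoly (n - j + m) y * eulpoly j z)"
      unfolding sum_distrib_left
    proof (rule sum.cong[OF refl])
      fix j assume "j \<in> {0..n}"
      hence j: "j \<le> n" by simp
      have sg: "(-1::complex) ^ j * ((-1) ^ m * (-1) ^ (n - j + m)) = (-1) ^ n"
        using j by (simp add: power_add[symmetric]) (simp add: power_add power_mult[symmetric] mult.commute[of 2] sign_split)
      have "fact m * fact n * ((-1) ^ j * eulpoly j z / fact j * ((-1) ^ m / (fact m * fact (n - j)) * ((-1) ^ (n - j + m) * bernpoly (n - j + m) y)))
         = ((-1) ^ j * ((-1) ^ m * (-1) ^ (n - j + m))) * (fact n / (fact j * fact (n - j))) * bernpoly (n - j + m) y * eulpoly j z"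
        by (simp add: field_simps)
      also have "\<dots> = (-1) ^ n * (of_nat (n choose j) * bernpoly (n - j + m) y * eulpoly j z)"
        unfolding sg fact_div[OF j] by (simp add: mult.assoc)
      finally show "fact m * fact n * ((-1) ^ j * eulpoly j z / fact j * ((-1) ^ m / (fact m * fact (n - j)) * ((-1) ^ (n - j + m) * bernpoly (n - j + m) y)))
         = (-1) ^ n * (of_nat (n choose j) * bernpoly (n - j + m) y * eulpoly j z)" .
    qed
    also have "(\<Sum>j=0..n. of_nat (n choose j) * bernpoly (n - j + m) y * eulpoly j z)
       = (\<Sum>k=0..n. of_nat (n choose k) * bernpoly (m + k) y * eulpoly (n - k) z)"
      by (subst sum_rev0) (rule sum.cong, auto simp: binomial_symmetric[symmetric] add.commute)
    finally show ?thesis .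
  qed
  have s3: "fact m * fact n * (eulpoly n x / fact n * (eulpoly m' y / fact m') - eulpoly n' x / fact n' * (eulpoly m y / fact m))
     = of_nat m * eulpoly n x * eulpoly (m - 1) y - of_nat n * eulpoly (n - 1) x * eulpoly m y"
  proof -
    have "n - 1 = n'" "m - 1 = m'" using m' n' by simp_all
    thus ?thesis using fm m n by (simp add: field_simps)
  qed
  from G have "fact m * fact n * (2 * (fps_nth (fps_nth (S (negf (bE z)) * U (bB x)) m) n
      - fps_nth (fps_nth (fps_const (negf (bE z)) * U (negf (bB y))) m) n))
     = fact m * fact n * fps_nth (fps_nth ((fps_X - tX) * (fps_const (bE x) * S (bE y))) m) n"
    by (simp add: two_nth)
  hence "2 * ((-1) ^ m * (\<Sum>k=0..m. of_nat (m choose k) * bernpoly (n + k) x * eulpoly (m - k) z)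
       - (-1) ^ n * (\<Sum>k=0..n. of_nat (n choose k) * bernpoly (m + k) y * eulpoly (n - k) z))
       = fact m * fact n * (eulpoly n x / fact n * (eulpoly m' y / fact m') - eulpoly n' x / fact n' * (eulpoly m y / fact m))"
    unfolding h1 h2 h3 by (simp only: s1[symmetric] s2[symmetric]) (simp add: algebra_simps)
  thus ?thesis unfolding s3 .
qed

lemma baseC:
  assumes xyz: "x + y + z = 1" and m: "0 < m"
  shows "2 * (bernpoly m x * eulpoly n z - (-1) ^ m * (\<Sum>k=0..m. of_nat (m choose k) * bernpoly (m - k) y * eulpoly (n + k) z))
       = - ((-1) ^ n * of_nat m * (\<Sum>k=0..n. of_nat (n choose k) * eulpoly (n - k) y * eulpoly (m - 1 + k) x))"
proof -
  obtain m' where m': "m = Suc m'" using m by (cases m) auto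
  have G: "fps_nth (fps_nth (2 * (S (bB x) * fps_const (bE z) - S (negf (bB y)) * U (bE z))) m) n
     = fps_nth (fps_nth (- (fps_X * (fps_const (negf (bE y)) * U (negf (bE x))))) m) n"
    using GC[OF xyz] by simp
  have h0: "fps_nth (fps_nth (S (bB x) * fps_const (bE z)) m) n = bernpoly m x / fact m * (eulpoly n z / fact n)"
    by (simp add: S_nth bB_nth bE_nth)
  have h1: "fps_nth (fps_nth (S (negf (bB y)) * U (bE z)) m) n
     = (\<Sum>i=0..m. (-1) ^ i * bernpoly i y / fact i * ((-1) ^ (m - i) / (fact (m - i) * fact n) * eulpoly (n + (m - i)) z))"
    unfolding SG_nth by (simp add: negf_bB_nth U_bE_nth)
  have h2: "fps_nth (fps_nth (fps_X * (fps_const (negf (bE y)) * U (negf (bE x)))) m) n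
     = (\<Sum>j=0..n. (-1) ^ j * eulpoly j y / fact j * ((-1) ^ m' / (fact m' * fact (n - j)) * ((-1) ^ (n - j + m') * eulpoly (n - j + m') x)))"
    unfolding sX_nth TG_nth using m' by (simp add: negf_bE_nth U_negf_bE_nth)
  have fm: "fact m = of_nat m * (fact m' :: complex)"
    using m' by (simp_all add: fact_reduce)
  have s0: "fact m * fact n * (bernpoly m x / fact m * (eulpoly n z / fact n)) = bernpoly m x * eulpoly n z"
    by simp
  have s1: "fact m * fact n * (\<Sum>i=0..m. (-1) ^ i * bernpoly i y / fact i * ((-1) ^ (m - i) / (fact (m - i) * fact n) * eulpoly (n + (m - i)) z))
     = (-1) ^ m * (\<Sum>k=0..m. of_nat (m choose k) * bernpoly (m - k) y * eulpoly (n + k) z)"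
  proof -
    have "fact m * fact n * (\<Sum>i=0..m. (-1) ^ i * bernpoly i y / fact i * ((-1) ^ (m - i) / (fact (m - i) * fact n) * eulpoly (n + (m - i)) z))
      = (-1) ^ m * (\<Sum>i=0..m. of_nat (m choose i) * bernpoly i y * eulpoly (n + (m - i)) z)"
      unfolding sum_distrib_left
    proof (rule sum.cong[OF refl])
      fix i assume "i \<in> {0..m}"
      hence i: "i \<le> m" by simp
      have "fact m * fact n * ((-1) ^ i * bernpoly i y / fact i * ((-1) ^ (m - i) / (fact (m - i) * fact n) * eulpoly (n + (m - i)) z))
         = ((-1) ^ i * (-1) ^ (m - i)) * (fact m / (fact i * fact (m - i))) * bernpoly i y * eulpoly (n + (m - i)) z"
        by (simp add: field_simps)
      also have "\<dots> = (-1) ^ m * (of_nat (m choose i) * bernpoly i y * eulpoly (n + (m - i)) z)"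
        unfolding sign_split[OF i] fact_div[OF i] by (simp add: mult.assoc)
      finally show "fact m * fact n * ((-1) ^ i * bernpoly i y / fact i * ((-1) ^ (m - i) / (fact (m - i) * fact n) * eulpoly (n + (m - i)) z))
         = (-1) ^ m * (of_nat (m choose i) * bernpoly i y * eulpoly (n + (m - i)) z)" .
    qed
    also have "(\<Sum>i=0..m. of_nat (m choose i) * bernpoly i y * eulpoly (n + (m - i)) z)
       = (\<Sum>k=0..m. of_nat (m choose k) * bernpoly (m - k) y * eulpoly (n + k) z)"
      by (subst sum_rev0) (rule sum.cong, auto simp: binomial_symmetric[symmetric])
    finally show ?thesis .
  qed
  have s2: "fact m * fact n * (\<Sum>j=0..n. (-1) ^ j * eulpoly j y / fact j * ((-1) ^ m' / (fact m' * fact (n - j)) * ((-1) ^ (n - j + m') * eulpoly (n - j + m') x)))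
     = (-1) ^ n * of_nat m * (\<Sum>k=0..n. of_nat (n choose k) * eulpoly (n - k) y * eulpoly (m - 1 + k) x)"
  proof -
    have "fact m * fact n * (\<Sum>j=0..n. (-1) ^ j * eulpoly j y / fact j * ((-1) ^ m' / (fact m' * fact (n - j)) * ((-1) ^ (n - j + m') * eulpoly (n - j + m') x)))
      = (-1) ^ n * of_nat m * (\<Sum>j=0..n. of_nat (n choose j) * eulpoly j y * eulpoly (n - j + m') x)"
      unfolding sum_distrib_left
    proof (rule sum.cong[OF refl])
      fix j assume "j \<in> {0..n}"
      hence j: "j \<le> n" by simp
      have sg: "(-1::complex) ^ j * ((-1) ^ m' * (-1) ^ (n - j + m')) = (-1) ^ n"
        using j by (simp add: power_add[symmetric]) (simp add: power_add power_mult[symmetric] mult.commute[of 2] sign_split)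
      have "fact m * fact n * ((-1) ^ j * eulpoly j y / fact j * ((-1) ^ m' / (fact m' * fact (n - j)) * ((-1) ^ (n - j + m') * eulpoly (n - j + m') x)))
         = ((-1) ^ j * ((-1) ^ m' * (-1) ^ (n - j + m'))) * of_nat m * (fact n / (fact j * fact (n - j))) * eulpoly j y * eulpoly (n - j + m') x"
        using fm by (simp add: field_simps)
      also have "\<dots> = (-1) ^ n * of_nat m * (of_nat (n choose j) * eulpoly j y * eulpoly (n - j + m') x)"
        unfolding sg fact_div[OF j] by (simp add: mult.assoc)
      finally show "fact m * fact n * ((-1) ^ j * eulpoly j y / fact j * ((-1) ^ m' / (fact m' * fact (n - j)) * ((-1) ^ (n - j + m') * eulpoly (n - j + m') x)))
         = (-1) ^ n * of_nat m * (of_nat (n choose j) * eulpoly j y * eulpoly (n - j + m') x)" .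
    qed
    also have "(\<Sum>j=0..n. of_nat (n choose j) * eulpoly j y * eulpoly (n - j + m') x)
       = (\<Sum>k=0..n. of_nat (n choose k) * eulpoly (n - k) y * eulpoly (m - 1 + k) x)"
      by (subst sum_rev0) (rule sum.cong, auto simp: m' binomial_symmetric[symmetric] add.commute)
    finally show ?thesis .
  qed
  from G have "fact m * fact n * (2 * (fps_nth (fps_nth (S (bB x) * fps_const (bE z)) m) n
      - fps_nth (fps_nth (S (negf (bB y)) * U (bE z)) m) n))
     = - (fact m * fact n * fps_nth (fps_nth (fps_X * (fps_const (negf (bE y)) * U (negf (bE x)))) m) n)"
    by (simp add: two_nth)
  thus ?thesis
    unfolding h0 h1 h2 by (simp only: s0[symmetric] s1[symmetric] s2[symmetric]) (simp add: algebra_simps)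
qed

subsection \<open>Polynomial lifting\<close>

definition PS :: "(nat \<Rightarrow> complex \<Rightarrow> complex) \<Rightarrow> nat \<Rightarrow> complex \<Rightarrow> complex \<Rightarrow> complex poly" where
  "PS f N x \<sigma> = (\<Sum>j\<le>N. monom (of_nat (N choose j) * \<sigma> ^ j * f (N - j) x) j)"

lemma coeff_PS: "coeff (PS f N x \<sigma>) j = (if j \<le> N then of_nat (N choose j) * \<sigma> ^ j * f (N - j) x else 0)"
  unfolding PS_def coeff_sum coeff_monom by (simp add: sum.delta)

lemma poly_PS_gen:
  assumes F: "\<And>x w. F (x + w) = fps_exp w * F x" and Fn: "\<And>r x. fps_nth (F x) r = f r x / fact r"
  shows "poly (PS f N x \<sigma>) w = f N (x + \<sigma> * w)"
proof -
  have "f N (x + \<sigma> * w) / fact N = fps_nth (fps_exp (\<sigma> * w) * F x) N"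
    by (simp add: F[symmetric] Fn)
  also have "\<dots> = (\<Sum>j=0..N. (\<sigma> * w) ^ j / fact j * (f (N - j) x / fact (N - j)))"
    by (simp add: fps_mult_nth Fn)
  finally have "f N (x + \<sigma> * w) = fact N * (\<Sum>j=0..N. (\<sigma> * w) ^ j / fact j * (f (N - j) x / fact (N - j)))"
    by (simp add: field_simps)
  also have "\<dots> = (\<Sum>j\<le>N. of_nat (N choose j) * \<sigma> ^ j * f (N - j) x * w ^ j)"
    unfolding sum_distrib_left atMost_atLeast0
    by (rule sum.cong[OF refl]) (simp add: binomial_fact field_simps power_mult_distrib)
  also have "\<dots> = poly (PS f N x \<sigma>) w"
    by (simp add: PS_def poly_sum poly_monom)
  finally show ?thesis by simp
qed

lemma poly_PS_B: "poly (PS bernpoly N x \<sigma>) w = bernpoly N (x + \<sigma> * w)"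
proof (rule poly_PS_gen[where F=bB])
  fix x w :: complex
  show "bB (x + w) = fps_exp w * bB x"
    by (simp only: bB_eq exp_add mult_ac)
qed (simp add: bB_nth)

lemma poly_PS_E: "poly (PS eulpoly N x \<sigma>) w = eulpoly N (x + \<sigma> * w)"
proof (rule poly_PS_gen[where F=bE])
  fix x w :: complex
  have "x + w - 1/2 = w + (x - 1/2)" by simp
  thus "bE (x + w) = fps_exp w * bE x"
    by (simp only: bE_eq exp_add mult_ac)
qed (simp add: bE_nth)

lemma pderiv_PS: "pderiv (PS f N x \<sigma>) = smult (of_nat N * \<sigma>) (PS f (N - 1) x \<sigma>)"
proof (rule poly_eqI)
  fix j
  show "coeff (pderiv (PS f N x \<sigma>)) j = coeff (smult (of_nat N * \<sigma>) (PS f (N - 1) x \<sigma>)) j"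
  proof (cases N)
    case 0 then show ?thesis by (simp add: coeff_pderiv coeff_PS)
  next
    case (Suc M)
    show ?thesis
    proof (cases "j \<le> M")
      case True
      have bin: "of_nat (Suc j) * of_nat (Suc M choose Suc j) = (of_nat (Suc M) * of_nat (M choose j) :: complex)"
        by (metis Suc_times_binomial of_nat_mult)
      have "of_nat (Suc j) * (of_nat (Suc M choose Suc j) * \<sigma> ^ Suc j * f (M - j) x)
          = (of_nat (Suc j) * of_nat (Suc M choose Suc j)) * (\<sigma> ^ Suc j * f (M - j) x)"
        by (simp only: mult.assoc)
      also have "\<dots> = (of_nat (Suc M) * of_nat (M choose j)) * (\<sigma> ^ Suc j * f (M - j) x)"
        by (simp only: bin)
      also have "\<dots> = of_nat (Suc M) * \<sigma> * (of_nat (M choose j) * \<sigma> ^ j * f (M - j) x)"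
        by (simp add: mult_ac)
      finally have e: "of_nat (Suc j) * (of_nat (Suc M choose Suc j) * \<sigma> ^ Suc j * f (M - j) x)
          = of_nat (Suc M) * \<sigma> * (of_nat (M choose j) * \<sigma> ^ j * f (M - j) x)" .
      have l: "coeff (pderiv (PS f N x \<sigma>)) j = of_nat (Suc j) * (of_nat (Suc M choose Suc j) * \<sigma> ^ Suc j * f (M - j) x)"
        unfolding coeff_pderiv coeff_PS using Suc True by simp
      have r: "coeff (smult (of_nat N * \<sigma>) (PS f (N - 1) x \<sigma>)) j = of_nat (Suc M) * \<sigma> * (of_nat (M choose j) * \<sigma> ^ j * f (M - j) x)"
        unfolding coeff_smult coeff_PS using Suc True by simp
      show ?thesis unfolding l r e ..
    next
      case False
      then show ?thesis using Suc by (simp add: coeff_pderiv coeff_PS)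
    qed
  qed
qed

lemma poly_eq_coeff: "(\<And>w. poly p w = poly q w) \<Longrightarrow> coeff p k = coeff (q::complex poly) k"
  using poly_eq_poly_eq_iff[of p q] by auto

lemma thm3:
  fixes l m n :: nat and x y z :: complex
  assumes l0: "0 < l" and m0: "0 < m" and n0: "0 < n" and lm: "l \<le> m" and ln: "l \<le> n" and xyz: "x + y + z = 1"
  shows "(-1) ^ m / of_nat m * (\<Sum>k=0..m. of_nat (m choose k) * of_nat ((n + k - 1) choose (l - 1))
        * bernpoly (n - l + k) x * bernpoly (m - k) z)
    + (-1) ^ l * ((-1) ^ n / of_nat n) * (\<Sum>k=0..n. of_nat (n choose k) * of_nat ((m + k - 1) choose (l - 1))
        * bernpoly (m - l + k) y * bernpoly (n - k) z)
    = of_nat l / (of_nat m * of_nat n) * (\<Sum>k=0..l. (-1) ^ k * of_nat (m choose k) * of_nat (n choose (l - k))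
        * bernpoly (n - l + k) x * bernpoly (m - k) y)"
proof -
  define A1 where "A1 = (\<Sum>k=0..m. of_nat (m choose k) * of_nat ((n + k - 1) choose (l - 1))
        * bernpoly (n - l + k) x * bernpoly (m - k) z)"
  define A2 where "A2 = (\<Sum>k=0..n. of_nat (n choose k) * of_nat ((m + k - 1) choose (l - 1))
        * bernpoly (m - l + k) y * bernpoly (n - k) z)"
  define A3 where "A3 = (\<Sum>k=0..l. (-1) ^ k * of_nat (m choose k) * of_nat (n choose (l - k))
        * bernpoly (n - l + k) x * bernpoly (m - k) y)"
  define P where "P = smult (of_nat n * (-1) ^ m) (\<Sum>k=0..m. smult (of_nat (m choose k) * bernpoly (m - k) z) (PS bernpoly (n - 1 + k) x 1))
     - smult (of_nat m * (-1) ^ n) (\<Sum>k=0..n. smult (of_nat (n choose k) * bernpoly (n - k) z) (PS bernpoly (m - 1 + k) y (-1)))"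
  define Q where "Q = pderiv (PS bernpoly n x 1 * PS bernpoly m y (-1))"
  have PQ: "poly P w = poly Q w" for w
  proof -
    have "poly P w = of_nat n * (-1) ^ m * (\<Sum>k=0..m. of_nat (m choose k) * bernpoly (n - 1 + k) (x + w) * bernpoly (m - k) z)
       - of_nat m * (-1) ^ n * (\<Sum>k=0..n. of_nat (n choose k) * bernpoly (m - 1 + k) (y - w) * bernpoly (n - k) z)"
      by (simp add: P_def poly_sum poly_PS_B mult_ac)
    also have "\<dots> = of_nat n * bernpoly (n - 1) (x + w) * bernpoly m (y - w) - of_nat m * bernpoly n (x + w) * bernpoly (m - 1) (y - w)"
      by (rule baseA) (use xyz m0 n0 in auto)
    also have "\<dots> = poly Q w"
      by (simp add: Q_def pderiv_mult pderiv_PS poly_PS_B algebra_simps)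
    finally show ?thesis .
  qed
  have c1: "coeff P (l - 1) = of_nat n * (-1) ^ m * A1 - of_nat m * (-1) ^ n * (-1) ^ (l - 1) * A2"
  proof -
    have a: "coeff (\<Sum>k=0..m. smult (of_nat (m choose k) * bernpoly (m - k) z) (PS bernpoly (n - 1 + k) x 1)) (l - 1) = A1"
      unfolding coeff_sum coeff_smult coeff_PS A1_def
    proof (rule sum.cong[OF refl])
      fix k assume "k \<in> {0..m}"
      have e: "n - 1 + k = n + k - 1" "n + k - 1 - (l - 1) = n - l + k" and e1: "l - 1 \<le> n + k - 1"
        using l0 n0 ln by auto
      show "of_nat (m choose k) * bernpoly (m - k) z * (if l - 1 \<le> n - 1 + k then of_nat (n - 1 + k choose (l - 1)) * 1 ^ (l - 1) * bernpoly (n - 1 + k - (l - 1)) x else 0)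
         = of_nat (m choose k) * of_nat ((n + k - 1) choose (l - 1)) * bernpoly (n - l + k) x * bernpoly (m - k) z"
        unfolding e if_P[OF e1] by (simp add: mult_ac)
    qed
    have b: "coeff (\<Sum>k=0..n. smult (of_nat (n choose k) * bernpoly (n - k) z) (PS bernpoly (m - 1 + k) y (-1))) (l - 1) = (-1) ^ (l - 1) * A2"
      unfolding coeff_sum coeff_smult coeff_PS A2_def sum_distrib_left
    proof (rule sum.cong[OF refl])
      fix k assume "k \<in> {0..n}"
      have e: "m - 1 + k = m + k - 1" "m + k - 1 - (l - 1) = m - l + k" and e1: "l - 1 \<le> m + k - 1"
        using l0 m0 lm by auto
      show "of_nat (n choose k) * bernpoly (n - k) z * (if l - 1 \<le> m - 1 + k then of_nat (m - 1 + k choose (l - 1)) * (-1) ^ (l - 1) * bernpoly (m - 1 + k - (l - 1)) y else 0)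
         = (-1) ^ (l - 1) * (of_nat (n choose k) * of_nat ((m + k - 1) choose (l - 1)) * bernpoly (m - l + k) y * bernpoly (n - k) z)"
        unfolding e if_P[OF e1] by (simp add: mult_ac)
    qed
    show ?thesis unfolding P_def coeff_diff coeff_smult a b by (simp add: mult_ac)
  qed
  have c2: "coeff Q (l - 1) = of_nat l * A3"
  proof -
    have "coeff Q (l - 1) = of_nat l * (\<Sum>i\<le>l. coeff (PS bernpoly n x 1) i * coeff (PS bernpoly m y (-1)) (l - i))"
      unfolding Q_def coeff_pderiv coeff_mult using l0 by simp
    also have "(\<Sum>i\<le>l. coeff (PS bernpoly n x 1) i * coeff (PS bernpoly m y (-1)) (l - i)) = A3"
      unfolding atMost_atLeast0 A3_def
    proof (subst sum_rev0, rule sum.cong[OF refl])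
      fix k assume "k \<in> {0..l}"
      hence k: "k \<le> l" by simp
      have e: "l - k \<le> n" "l - (l - k) = k" "n - (l - k) = n - l + k" "k \<le> m"
        using k ln lm by auto
      show "coeff (PS bernpoly n x 1) (l - k) * coeff (PS bernpoly m y (-1)) (l - (l - k))
         = (-1) ^ k * of_nat (m choose k) * of_nat (n choose (l - k)) * bernpoly (n - l + k) x * bernpoly (m - k) y"
        unfolding coeff_PS e(2,3) by (simp add: e(1,4) mult_ac)
    qed
    finally show ?thesis .
  qed
  have key: "of_nat n * (-1) ^ m * A1 - of_nat m * (-1) ^ n * (-1) ^ (l - 1) * A2 = of_nat l * A3"
    using poly_eq_coeff[OF PQ, of "l - 1"] c1 c2 by simp
  have sl: "(-1::complex) ^ l = - ((-1) ^ (l - 1))"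
    using l0 by (cases l) auto
  have key2: "of_nat n * (-1) ^ m * A1 + of_nat m * ((-1) ^ l * (-1) ^ n) * A2 = of_nat l * A3"
    using key unfolding sl by (simp add: algebra_simps)
  have mn: "(of_nat m :: complex) \<noteq> 0" "(of_nat n :: complex) \<noteq> 0" using m0 n0 by auto
  show ?thesis
    unfolding A1_def[symmetric] A2_def[symmetric] A3_def[symmetric]
    using key2 mn by (simp add: field_simps)
qed




lemma sign_diff: "l \<le> n \<Longrightarrow> (-1::complex) ^ (n - l) = (-1) ^ n * (-1) ^ l"
proof -
  assume "l \<le> n"
  hence "(-1::complex) ^ n = (-1) ^ (n - l) * (-1) ^ l" by (simp add: power_add[symmetric])
  hence "(-1::complex) ^ n * (-1) ^ l = (-1) ^ (n - l) * ((-1) ^ l * (-1) ^ l)" by simp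
  also have "(-1::complex) ^ l * (-1) ^ l = 1" by (simp add: power_add[symmetric] power_mult_distrib[symmetric])
  finally show ?thesis by simp
qed

lemma sign_powi: "l \<le> n \<Longrightarrow> (-1::complex) powi (int n - int l - 1) = - ((-1) ^ n * (-1) ^ l)"
proof -
  assume ln: "l \<le> n"
  show ?thesis
  proof (cases "l = n")
    case True
    have "(-1::complex) ^ n * (-1) ^ n = 1" by (simp add: power_add[symmetric] power_mult_distrib[symmetric])
    then show ?thesis using True by (simp add: power_int_def)
  next
    case False
    hence "int n - int l - 1 = int (n - l - 1)" using ln by simp
    moreover have "(-1::complex) ^ n * (-1) ^ l = - ((-1) ^ (n - l - 1))"
    proof -
      define d where "d = n - l - 1"
      have nd: "n = d + l + 1" using ln False unfolding d_def by simp
      have "(-1::complex) ^ n * (-1) ^ l = (-1) ^ d * ((-1) ^ l * (-1) ^ l) * (-1)"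
        unfolding nd by (simp add: power_add mult_ac)
      also have "(-1::complex) ^ l * (-1) ^ l = 1" by (simp add: power_add[symmetric] power_mult_distrib[symmetric])
      finally show ?thesis unfolding d_def by simp
    qed
    ultimately show ?thesis by (simp only: power_int_of_nat minus_minus)
  qed
qed



lemma thm1:
  fixes l m n :: nat and x y z :: complex
  assumes l0: "0 < l" and m0: "0 < m" and n0: "0 < n" and lm: "l \<le> m" and ln: "l \<le> n" and xyz: "x + y + z = 1"
  shows "(-1) ^ m * (\<Sum>k=0..m. of_nat (m choose k) * of_nat ((n + k) choose (l - 1))
        * bernpoly (n - l + k + 1) x * eulpoly (m - k) z)
    + (-1) ^ (n - l) * (\<Sum>k=0..n. of_nat (n choose k) * of_nat ((m + k) choose (l - 1))
        * bernpoly (m - l + k + 1) y * eulpoly (n - k) z)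
    = - (of_nat l / 2) * (\<Sum>k=0..l. (-1) ^ k * of_nat (m choose k) * of_nat (n choose (l - k))
        * eulpoly (n - l + k) x * eulpoly (m - k) y)"
proof -
  define A1 where "A1 = (\<Sum>k=0..m. of_nat (m choose k) * of_nat ((n + k) choose (l - 1))
        * bernpoly (n - l + k + 1) x * eulpoly (m - k) z)"
  define A2 where "A2 = (\<Sum>k=0..n. of_nat (n choose k) * of_nat ((m + k) choose (l - 1))
        * bernpoly (m - l + k + 1) y * eulpoly (n - k) z)"
  define A3 where "A3 = (\<Sum>k=0..l. (-1) ^ k * of_nat (m choose k) * of_nat (n choose (l - k))
        * eulpoly (n - l + k) x * eulpoly (m - k) y)"
  define P where "P = smult 2 (smult ((-1) ^ m) (\<Sum>k=0..m. smult (of_nat (m choose k) * eulpoly (m - k) z) (PS bernpoly (n + k) x 1))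
     - smult ((-1) ^ n) (\<Sum>k=0..n. smult (of_nat (n choose k) * eulpoly (n - k) z) (PS bernpoly (m + k) y (-1))))"
  define Q where "Q = - pderiv (PS eulpoly n x 1 * PS eulpoly m y (-1))"
  have PQ: "poly P w = poly Q w" for w
  proof -
    have "poly P w = 2 * ((-1) ^ m * (\<Sum>k=0..m. of_nat (m choose k) * bernpoly (n + k) (x + w) * eulpoly (m - k) z)
       - (-1) ^ n * (\<Sum>k=0..n. of_nat (n choose k) * bernpoly (m + k) (y - w) * eulpoly (n - k) z))"
      by (simp add: P_def poly_sum poly_PS_B mult_ac)
    also have "\<dots> = of_nat m * eulpoly n (x + w) * eulpoly (m - 1) (y - w) - of_nat n * eulpoly (n - 1) (x + w) * eulpoly m (y - w)"
      by (rule baseB) (use xyz m0 n0 in auto)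
    also have "\<dots> = poly Q w"
      by (simp add: Q_def pderiv_mult pderiv_PS poly_PS_E algebra_simps)
    finally show ?thesis .
  qed
  have c1: "coeff P (l - 1) = 2 * ((-1) ^ m * A1 - (-1) ^ n * ((-1) ^ (l - 1) * A2))"
  proof -
    have a: "coeff (\<Sum>k=0..m. smult (of_nat (m choose k) * eulpoly (m - k) z) (PS bernpoly (n + k) x 1)) (l - 1) = A1"
      unfolding coeff_sum coeff_smult coeff_PS A1_def
    proof (rule sum.cong[OF refl])
      fix k assume "k \<in> {0..m}"
      have e: "n + k - (l - 1) = n - l + k + 1" and e1: "l - 1 \<le> n + k"
        using l0 n0 ln by auto
      show "of_nat (m choose k) * eulpoly (m - k) z * (if l - 1 \<le> n + k then of_nat (n + k choose (l - 1)) * 1 ^ (l - 1) * bernpoly (n + k - (l - 1)) x else 0)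
         = of_nat (m choose k) * of_nat ((n + k) choose (l - 1)) * bernpoly (n - l + k + 1) x * eulpoly (m - k) z"
        unfolding e if_P[OF e1] by (simp add: mult_ac)
    qed
    have b: "coeff (\<Sum>k=0..n. smult (of_nat (n choose k) * eulpoly (n - k) z) (PS bernpoly (m + k) y (-1))) (l - 1) = (-1) ^ (l - 1) * A2"
      unfolding coeff_sum coeff_smult coeff_PS A2_def sum_distrib_left
    proof (rule sum.cong[OF refl])
      fix k assume "k \<in> {0..n}"
      have e: "m + k - (l - 1) = m - l + k + 1" and e1: "l - 1 \<le> m + k"
        using l0 m0 lm by auto
      show "of_nat (n choose k) * eulpoly (n - k) z * (if l - 1 \<le> m + k then of_nat (m + k choose (l - 1)) * (-1) ^ (l - 1) * bernpoly (m + k - (l - 1)) y else 0)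
         = (-1) ^ (l - 1) * (of_nat (n choose k) * of_nat ((m + k) choose (l - 1)) * bernpoly (m - l + k + 1) y * eulpoly (n - k) z)"
        unfolding e if_P[OF e1] by (simp add: mult_ac)
    qed
    show ?thesis unfolding P_def coeff_diff coeff_smult a b by (simp add: mult_ac)
  qed
  have c2: "coeff Q (l - 1) = - (of_nat l * A3)"
  proof -
    have "coeff Q (l - 1) = - (of_nat l * (\<Sum>i\<le>l. coeff (PS eulpoly n x 1) i * coeff (PS eulpoly m y (-1)) (l - i)))"
      unfolding Q_def coeff_minus coeff_pderiv coeff_mult using l0 by simp
    also have "(\<Sum>i\<le>l. coeff (PS eulpoly n x 1) i * coeff (PS eulpoly m y (-1)) (l - i)) = A3"
      unfolding atMost_atLeast0 A3_def
    proof (subst sum_rev0, rule sum.cong[OF refl])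
      fix k assume "k \<in> {0..l}"
      hence k: "k \<le> l" by simp
      have e: "l - k \<le> n" "l - (l - k) = k" "n - (l - k) = n - l + k" "k \<le> m"
        using k ln lm by auto
      show "coeff (PS eulpoly n x 1) (l - k) * coeff (PS eulpoly m y (-1)) (l - (l - k))
         = (-1) ^ k * of_nat (m choose k) * of_nat (n choose (l - k)) * eulpoly (n - l + k) x * eulpoly (m - k) y"
        unfolding coeff_PS e(2,3) by (simp add: e(1,4) mult_ac)
    qed
    finally show ?thesis .
  qed
  have key: "2 * ((-1) ^ m * A1 - (-1) ^ n * ((-1) ^ (l - 1) * A2)) = - (of_nat l * A3)"
    using poly_eq_coeff[OF PQ, of "l - 1"] c1 c2 by simp
  have sl: "(-1::complex) ^ (n - l) = - ((-1) ^ n * (-1) ^ (l - 1))"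
    using l0 ln by (cases l) (auto simp: sign_diff)
  have "(-1) ^ m * A1 + (-1) ^ (n - l) * A2 = (-1) ^ m * A1 - (-1) ^ n * ((-1) ^ (l - 1) * A2)"
    unfolding sl by (simp add: algebra_simps)
  also have "\<dots> = (2 * ((-1) ^ m * A1 - (-1) ^ n * ((-1) ^ (l - 1) * A2))) / 2"
    by simp
  also have "\<dots> = - (of_nat l / 2) * A3"
    unfolding key by simp
  finally show ?thesis
    unfolding A1_def A2_def A3_def .
qed



lemma thm2:
  fixes l m n :: nat and x y z :: complex
  assumes l0: "0 < l" and m0: "0 < m" and n0: "0 < n" and lm: "l \<le> m" and ln: "l \<le> n" and xyz: "x + y + z = 1"
  shows "(\<Sum>k=0..l. (-1) ^ k * of_nat (m choose k) * of_nat (n choose (l - k))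
        * bernpoly (m - k) x * eulpoly (n - l + k) z)
    - (-1) ^ m * (\<Sum>k=0..m. of_nat (m choose k) * of_nat ((n + k) choose l)
        * bernpoly (m - k) y * eulpoly (n - l + k) z)
    = (-1) powi (int n - int l - 1) * (of_nat m / 2)
      * (\<Sum>k=(if l = m then 1 else 0)..n. of_nat (n choose k) * of_nat ((m + k - 1) choose l)
          * eulpoly (n - k) y * eulpoly (m + k - l - 1) x)"
proof -
  define A1 where "A1 = (\<Sum>k=0..l. (-1) ^ k * of_nat (m choose k) * of_nat (n choose (l - k))
        * bernpoly (m - k) x * eulpoly (n - l + k) z)"
  define A2 where "A2 = (\<Sum>k=0..m. of_nat (m choose k) * of_nat ((n + k) choose l)
        * bernpoly (m - k) y * eulpoly (n - l + k) z)"
  define A3 where "A3 = (\<Sum>k=0..n. of_nat (n choose k) * of_nat ((m + k - 1) choose l)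
          * eulpoly (n - k) y * eulpoly (m + k - l - 1) x)"
  have A3': "(\<Sum>k=(if l = m then 1 else 0)..n. of_nat (n choose k) * of_nat ((m + k - 1) choose l)
          * eulpoly (n - k) y * eulpoly (m + k - l - 1) x) = A3"
  proof (cases "l = m")
    case True
    have "A3 = (\<Sum>k=Suc 0..n. of_nat (n choose k) * of_nat ((m + k - 1) choose l)
          * eulpoly (n - k) y * eulpoly (m + k - l - 1) x)"
      unfolding A3_def using True m0 by (simp add: sum.atLeast_Suc_atMost)
    then show ?thesis using True by simp
  qed (simp add: A3_def)
  define P where "P = smult 2 (PS bernpoly m x 1 * PS eulpoly n z (-1)
     - smult ((-1) ^ m) (\<Sum>k=0..m. smult (of_nat (m choose k) * bernpoly (m - k) y) (PS eulpoly (n + k) z (-1))))"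
  define Q where "Q = smult (- ((-1) ^ n * of_nat m)) (\<Sum>k=0..n. smult (of_nat (n choose k) * eulpoly (n - k) y) (PS eulpoly (m - 1 + k) x 1))"
  have PQ: "poly P w = poly Q w" for w
  proof -
    have "poly P w = 2 * (bernpoly m (x + w) * eulpoly n (z - w) - (-1) ^ m * (\<Sum>k=0..m. of_nat (m choose k) * bernpoly (m - k) y * eulpoly (n + k) (z - w)))"
      unfolding P_def poly_smult poly_diff poly_mult poly_sum poly_PS_B poly_PS_E
      by (simp add: sum_distrib_left mult_ac)
    also have "\<dots> = - ((-1) ^ n * of_nat m * (\<Sum>k=0..n. of_nat (n choose k) * eulpoly (n - k) y * eulpoly (m - 1 + k) (x + w)))"
      by (rule baseC) (use xyz m0 in \<open>auto simp: algebra_simps\<close>)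
    also have "\<dots> = poly Q w"
      unfolding Q_def poly_smult poly_sum poly_PS_E
      by (simp add: sum_distrib_left sum_negf mult_ac)
    finally show ?thesis .
  qed
  have c1: "coeff P l = 2 * ((-1) ^ l * A1 - (-1) ^ m * ((-1) ^ l * A2))"
  proof -
    have a: "coeff (PS bernpoly m x 1 * PS eulpoly n z (-1)) l = (-1) ^ l * A1"
      unfolding coeff_mult atMost_atLeast0 A1_def sum_distrib_left
    proof (rule sum.cong[OF refl])
      fix k assume "k \<in> {0..l}"
      hence k: "k \<le> l" by simp
      have e: "n - (l - k) = n - l + k" and e1: "k \<le> m" "l - k \<le> n"
        using k ln lm by auto
      have sg: "(-1::complex) ^ (l - k) = (-1) ^ l * (-1) ^ k" using k by (rule sign_diff)
      show "coeff (PS bernpoly m x 1) k * coeff (PS eulpoly n z (-1)) (l - k)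
         = (-1) ^ l * ((-1) ^ k * of_nat (m choose k) * of_nat (n choose (l - k)) * bernpoly (m - k) x * eulpoly (n - l + k) z)"
        unfolding coeff_PS e if_P[OF e1(1)] if_P[OF e1(2)] sg by (simp add: mult_ac)
    qed
    have b: "coeff (\<Sum>k=0..m. smult (of_nat (m choose k) * bernpoly (m - k) y) (PS eulpoly (n + k) z (-1))) l = (-1) ^ l * A2"
      unfolding coeff_sum coeff_smult coeff_PS A2_def sum_distrib_left
    proof (rule sum.cong[OF refl])
      fix k assume "k \<in> {0..m}"
      have e: "n + k - l = n - l + k" and e1: "l \<le> n + k"
        using ln by auto
      show "of_nat (m choose k) * bernpoly (m - k) y * (if l \<le> n + k then of_nat (n + k choose l) * (-1) ^ l * eulpoly (n + k - l) z else 0)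
         = (-1) ^ l * (of_nat (m choose k) * of_nat ((n + k) choose l) * bernpoly (m - k) y * eulpoly (n - l + k) z)"
        unfolding e if_P[OF e1] by (simp add: mult_ac)
    qed
    show ?thesis unfolding P_def coeff_diff coeff_smult a b by (simp add: mult_ac)
  qed
  have c2: "coeff Q l = - ((-1) ^ n * of_nat m) * A3"
  proof -
    have "coeff Q l = - ((-1) ^ n * of_nat m) * (\<Sum>k=0..n. of_nat (n choose k) * eulpoly (n - k) y * coeff (PS eulpoly (m - 1 + k) x 1) l)"
      unfolding Q_def coeff_smult coeff_sum by (rule refl)
    also have "(\<Sum>k=0..n. of_nat (n choose k) * eulpoly (n - k) y * coeff (PS eulpoly (m - 1 + k) x 1) l) = A3"
      unfolding A3_def
    proof (rule sum.cong[OF refl])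
      fix k assume "k \<in> {0..n}"
      show "of_nat (n choose k) * eulpoly (n - k) y * coeff (PS eulpoly (m - 1 + k) x 1) l
         = of_nat (n choose k) * of_nat ((m + k - 1) choose l) * eulpoly (n - k) y * eulpoly (m + k - l - 1) x"
      proof (cases "l \<le> m - 1 + k")
        case True
        have e: "m - 1 + k = m + k - 1" "m + k - 1 - l = m + k - l - 1" using m0 by auto
        show ?thesis unfolding coeff_PS if_P[OF True] e by (simp add: mult_ac)
      next
        case False
        hence "m + k - 1 < l" using m0 by simp
        hence "(m + k - 1) choose l = 0" by simp
        then show ?thesis unfolding coeff_PS using False by simp
      qed
    qed
    finally show ?thesis .
  qed
  have key: "2 * ((-1) ^ l * A1 - (-1) ^ m * ((-1) ^ l * A2)) = - ((-1) ^ n * of_nat m) * A3"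
    using poly_eq_coeff[OF PQ, of l] c1 c2 by simp
  have ll: "(-1::complex) ^ l * (-1) ^ l = 1" by (simp add: power_add[symmetric] power_mult_distrib[symmetric])
  have key2: "2 * (A1 - (-1) ^ m * A2) = - ((-1) ^ n * (-1) ^ l * of_nat m) * A3"
  proof -
    have "2 * (A1 - (-1) ^ m * A2) = (-1) ^ l * (2 * ((-1) ^ l * A1 - (-1) ^ m * ((-1) ^ l * A2)))"
      using ll by (simp add: algebra_simps)
    also have "\<dots> = - ((-1) ^ n * (-1) ^ l * of_nat m) * A3" unfolding key by (simp add: algebra_simps)
    finally show ?thesis .
  qed
  have "A1 - (-1) ^ m * A2 = (2 * (A1 - (-1) ^ m * A2)) / 2"
    by simp
  also have "\<dots> = - ((-1) ^ n * (-1) ^ l) * (of_nat m / 2) * A3"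
    unfolding key2 by simp
  finally show ?thesis
    unfolding A1_def[symmetric] A2_def[symmetric] A3' sign_powi[OF ln] .
qed


theorem theorem1p2:
  fixes l m n :: nat and x y z :: complex
  assumes "0 < l" "0 < m" "0 < n" "l \<le> m" "l \<le> n" "x + y + z = 1"
  shows
   "((-1) ^ m * (\<Sum>k=0..m. of_nat (m choose k) * of_nat ((n + k) choose (l - 1))
        * bernpoly (n - l + k + 1) x * eulpoly (m - k) z)
    + (-1) ^ (n - l) * (\<Sum>k=0..n. of_nat (n choose k) * of_nat ((m + k) choose (l - 1))
        * bernpoly (m - l + k + 1) y * eulpoly (n - k) z)
    = - (of_nat l / 2) * (\<Sum>k=0..l. (-1) ^ k * of_nat (m choose k) * of_nat (n choose (l - k))
        * eulpoly (n - l + k) x * eulpoly (m - k) y))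
   \<and>
   ((\<Sum>k=0..l. (-1) ^ k * of_nat (m choose k) * of_nat (n choose (l - k))
        * bernpoly (m - k) x * eulpoly (n - l + k) z)
    - (-1) ^ m * (\<Sum>k=0..m. of_nat (m choose k) * of_nat ((n + k) choose l)
        * bernpoly (m - k) y * eulpoly (n - l + k) z)
    = (-1) powi (int n - int l - 1) * (of_nat m / 2)
      * (\<Sum>k=(if l = m then 1 else 0)..n. of_nat (n choose k) * of_nat ((m + k - 1) choose l)
          * eulpoly (n - k) y * eulpoly (m + k - l - 1) x))
   \<and>
   ((-1) ^ m / of_nat m * (\<Sum>k=0..m. of_nat (m choose k) * of_nat ((n + k - 1) choose (l - 1))
        * bernpoly (n - l + k) x * bernpoly (m - k) z)
    + (-1) ^ l * ((-1) ^ n / of_nat n) * (\<Sum>k=0..n. of_nat (n choose k) * of_nat ((m + k - 1) choose (l - 1))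
        * bernpoly (m - l + k) y * bernpoly (n - k) z)
    = of_nat l / (of_nat m * of_nat n) * (\<Sum>k=0..l. (-1) ^ k * of_nat (m choose k) * of_nat (n choose (l - k))
        * bernpoly (n - l + k) x * bernpoly (m - k) y))"
  using thm1[OF assms] thm2[OF assms] thm3[OF assms] by blast

end
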